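(* Let $K$ be a Polish group admitting a compatible bi-invariant metric and let $\Gamma \leq K$ be a discrete subgroup. Let $(Z, d_Z)$ be a bounded Polish metric space on which $\Gamma$ acts faithfully by isometries. Then there exist a bounded Polish metric space $(Y, d_Y)$, a continuous, faithful, isometric action of $K$ on $Y$, and an isometric embedding $e \colon Z \to Y$ which is $\Gamma$-equivariant (i.e., $e(\gamma\cdot z)=\gamma\cdot e(z)$ for all $\gamma\in\Gamma$, $z\in Z$). *)

theory Defs
  imports "HOL-Analysis.Analysis" "HOL-Algebra.Group_Action"
begin

definition Polish_space :: "'a topology \<Rightarrow> bool" where
  "Polish_space X \<longleftrightarrow> completely_metrizable_space X \<and> separable_space X"

definition Polish_metric_space :: "'a set \<Rightarrow> ('a \<Rightarrow> 'a \<Rightarrow> real) \<Rightarrow> bool" where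
  "Polish_metric_space M d \<longleftrightarrow>
     Metric_space M d \<and> Metric_space.mcomplete M d \<and> separable_space (Metric_space.mtopology M d)"

definition bounded_metric_space :: "'a set \<Rightarrow> ('a \<Rightarrow> 'a \<Rightarrow> real) \<Rightarrow> bool" where
  "bounded_metric_space M d \<longleftrightarrow> Metric_space M d \<and> Metric_space.mbounded M d M"

definition topological_group :: "('g, 'b) monoid_scheme \<Rightarrow> 'g topology \<Rightarrow> bool" where
  "topological_group G T \<longleftrightarrow> group G \<and> topspace T = carrier G \<and>
     continuous_map (prod_topology T T) T (\<lambda>(x, y). x \<otimes>\<^bsub>G\<^esub> y) \<and>
     continuous_map T T (\<lambda>x. inv\<^bsub>G\<^esub> x)"

definition Polish_group :: "('g, 'b) monoid_scheme \<Rightarrow> 'g topology \<Rightarrow> bool" where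
  "Polish_group G T \<longleftrightarrow> topological_group G T \<and> Polish_space T"

definition has_compatible_biinvariant_metric :: "('g, 'b) monoid_scheme \<Rightarrow> 'g topology \<Rightarrow> bool" where
  "has_compatible_biinvariant_metric G T \<longleftrightarrow>
     (\<exists>d. Metric_space (carrier G) d \<and> Metric_space.mtopology (carrier G) d = T \<and>
          (\<forall>g\<in>carrier G. \<forall>x\<in>carrier G. \<forall>y\<in>carrier G.
             d (g \<otimes>\<^bsub>G\<^esub> x) (g \<otimes>\<^bsub>G\<^esub> y) = d x y \<and>
             d (x \<otimes>\<^bsub>G\<^esub> g) (y \<otimes>\<^bsub>G\<^esub> g) = d x y))"

definition discrete_subgroup :: "'g set \<Rightarrow> ('g, 'b) monoid_scheme \<Rightarrow> 'g topology \<Rightarrow> bool" where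
  "discrete_subgroup H G T \<longleftrightarrow> subgroup H G \<and> subtopology T H = discrete_topology H"

definition isometric_action :: "'g set \<Rightarrow> 'a set \<Rightarrow> ('a \<Rightarrow> 'a \<Rightarrow> real) \<Rightarrow> ('g \<Rightarrow> 'a \<Rightarrow> 'a) \<Rightarrow> bool" where
  "isometric_action A M d \<phi> \<longleftrightarrow> (\<forall>g\<in>A. \<forall>x\<in>M. \<forall>y\<in>M. d (\<phi> g x) (\<phi> g y) = d x y)"

end

theory Submission
  imports Defs
begin


lemma fdist_ge:
  fixes f g :: "'b \<Rightarrow> real"
  assumes "f \<in> Met_TC.fspace S" "g \<in> Met_TC.fspace S" "x \<in> S"
  shows "dist (f x) (g x) \<le> Met_TC.fdist S f g"
  using Met_TC.funspace_mdist_le[OF assms(1,2), of "Met_TC.fdist S f g"] assms(3) by auto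

lemma fdist_le:
  fixes f g :: "'b \<Rightarrow> real"
  assumes "f \<in> Met_TC.fspace S" "g \<in> Met_TC.fspace S" "S \<noteq> {}" "\<And>x. x \<in> S \<Longrightarrow> dist (f x) (g x) \<le> a"
  shows "Met_TC.fdist S f g \<le> a"
  using Met_TC.funspace_mdist_le[OF assms(1,2,3)] assms(4) by auto

lemma fspaceI:
  fixes f :: "'b \<Rightarrow> real"
  assumes "f \<in> extensional S" "\<And>x. x \<in> S \<Longrightarrow> \<bar>f x\<bar> \<le> B"
  shows "f \<in> Met_TC.fspace S"
  unfolding Met_TC.fspace_def using assms
  by (auto simp: bounded_iff)

lemma mcomplete_F: "Metric_space.mcomplete (Met_TC.fspace S) (Met_TC.fdist S :: ('b \<Rightarrow> real) \<Rightarrow> _)"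
proof -
  have "Met_TC.mcomplete TYPE(real)" by (simp add: complete_UNIV)
  then have "mcomplete_of (funspace S (Met_TC.Self :: real metric))"
    by (rule Met_TC.mcomplete_funspace)
  then show ?thesis
    by (simp add: mcomplete_of_def)
qed




locale cnstr =
  fixes K :: "('g,'b) monoid_scheme" (structure)
   and d :: "'g \<Rightarrow> 'g \<Rightarrow> real" and \<Gamma> :: "'g set" and Z :: "'z set"
   and dZ :: "'z \<Rightarrow> 'z \<Rightarrow> real" and \<phi> :: "'g \<Rightarrow> 'z \<Rightarrow> 'z" and B \<delta> :: real
  assumes grp: "group K"
   and dmet: "Metric_space (carrier K) d"
   and binv: "\<And>g x y. g\<in>carrier K \<Longrightarrow> x\<in>carrier K \<Longrightarrow> y\<in>carrier K \<Longrightarrow>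
                d (g \<otimes> x) (g \<otimes> y) = d x y \<and> d (x \<otimes> g) (y \<otimes> g) = d x y"
   and sub: "subgroup \<Gamma> K"
   and ga: "group_action (K\<lparr>carrier := \<Gamma>\<rparr>) Z \<phi>"
   and iso: "isometric_action \<Gamma> Z dZ \<phi>"
   and zmet: "Metric_space Z dZ"
   and Bb: "\<And>x y. x\<in>Z \<Longrightarrow> y\<in>Z \<Longrightarrow> dZ x y \<le> B" and B1: "1 \<le> B"
   and dpos: "\<delta> > 0" and disc: "\<And>\<gamma>. \<gamma>\<in>\<Gamma> \<Longrightarrow> d \<one> \<gamma> < \<delta> \<Longrightarrow> \<gamma> = \<one>"
begin

sublocale group K by (rule grp)
sublocale dm: Metric_space "carrier K" d by (rule dmet)
sublocale zm: Metric_space Z dZ by (rule zmet)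

definition "C = B / \<delta>"
definition "L = max C 1"
definition "W = insert None (Some ` Z)"
definition "I = carrier K \<times> W"
definition "act g f = (\<lambda>x\<in>I. f (inv g \<otimes> fst x, snd x))"
definition "Lip f \<longleftrightarrow> (\<forall>k\<in>carrier K. \<forall>k'\<in>carrier K. \<forall>w\<in>W. \<bar>f (k,w) - f (k',w)\<bar> \<le> L * d k k')"
definition "Bnd f \<longleftrightarrow> (\<forall>x\<in>I. \<bar>f x\<bar> \<le> B)"

abbreviation F :: "('g \<times> 'z option \<Rightarrow> real) set" where "F \<equiv> Met_TC.fspace I"
abbreviation D :: "('g \<times> 'z option \<Rightarrow> real) \<Rightarrow> _ \<Rightarrow> real" where "D \<equiv> Met_TC.fdist I"

lemma L_ge: "L \<ge> 1" "L \<ge> C" by (auto simp: L_def)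

lemma Fmet: "Metric_space F D"
  by (rule Met_TC.Metric_space_funspace)

lemma I_ne: "I \<noteq> {}"
  by (auto simp: I_def W_def)

lemma mem_I: "(k,w) \<in> I \<longleftrightarrow> k \<in> carrier K \<and> w \<in> W"
  by (simp add: I_def)

lemma BndF: "f \<in> extensional I \<Longrightarrow> Bnd f \<Longrightarrow> f \<in> F"
  by (rule fspaceI[where B=B]) (auto simp: Bnd_def)

lemma act_ext: "act g f \<in> extensional I"
  by (simp add: act_def)

lemma act_I: "g \<in> carrier K \<Longrightarrow> x \<in> I \<Longrightarrow> (inv g \<otimes> fst x, snd x) \<in> I"
  by (auto simp: I_def)

lemma act_Bnd: "Bnd f \<Longrightarrow> g \<in> carrier K \<Longrightarrow> Bnd (act g f)"
  using act_I by (auto simp: Bnd_def act_def)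

lemma act_comp: assumes "g \<in> carrier K" "h \<in> carrier K" shows "act g (act h f) = act (g \<otimes> h) f"
proof (rule ext)
  fix x show "act g (act h f) x = act (g \<otimes> h) f x"
  proof (cases "x \<in> I")
    case True
    then have "fst x \<in> carrier K" by (auto simp: I_def)
    moreover have "(inv g \<otimes> fst x, snd x) \<in> I" using act_I[OF assms(1) True] .
    ultimately show ?thesis using True assms
      by (simp add: act_def inv_mult_group m_assoc)
  qed (simp add: act_def)
qed

lemma act_one: assumes "f \<in> extensional I" shows "act \<one> f = f"
proof (rule ext)
  fix x
  show "act \<one> f x = f x"
  proof (cases "x \<in> I")
    case True
    then have "fst x \<in> carrier K" by (auto simp: I_def)
    then have "inv \<one> \<otimes> fst x = fst x" by simp
    then show ?thesis using True unfolding act_def by simp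
  next
    case False
    have "f x = undefined" using assms False by (rule extensional_arb)
    moreover have "act \<one> f x = undefined" using False unfolding act_def by simp
    ultimately show ?thesis by simp
  qed
qed

lemma act_F: assumes "f \<in> F" "g \<in> carrier K" shows "act g f \<in> F"
proof -
  have "act g f ` I \<subseteq> f ` I" using act_I[OF assms(2)] by (auto simp: act_def)
  moreover have "bounded (f ` I)" using assms(1) by (simp add: Met_TC.fspace_def)
  ultimately have "bounded (act g f ` I)" by (rule bounded_subset[rotated])
  then show ?thesis
    by (simp add: Met_TC.fspace_def act_ext)
qed

lemma act_iso_le: assumes "f \<in> F" "f' \<in> F" "g \<in> carrier K"
  shows "D (act g f) (act g f') \<le> D f f'"
proof (rule fdist_le[OF act_F[OF assms(1,3)] act_F[OF assms(2,3)] I_ne])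
  fix x assume "x \<in> I"
  then show "dist (act g f x) (act g f' x) \<le> D f f'"
    using fdist_ge[OF assms(1,2) act_I[OF assms(3)]] by (simp add: act_def)
qed

lemma act_iso: assumes "f \<in> F" "f' \<in> F" "g \<in> carrier K"
  shows "D (act g f) (act g f') = D f f'"
proof -
  have ig: "inv g \<in> carrier K" using assms by simp
  have "D f f' = D (act (inv g) (act g f)) (act (inv g) (act g f'))"
    using assms by (simp add: act_comp act_one Met_TC.fspace_def)
  also have "\<dots> \<le> D (act g f) (act g f')"
    by (rule act_iso_le[OF act_F[OF assms(1,3)] act_F[OF assms(2,3)] ig])
  finally show ?thesis using act_iso_le[OF assms] by linarith
qed

lemma d_inv: assumes "g \<in> carrier K" "h \<in> carrier K" shows "d (inv g) (inv h) = d g h"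
proof -
  have "d (inv g) (inv h) = d (g \<otimes> inv g) (g \<otimes> inv h)" using binv[of g "inv g" "inv h"] assms by simp
  also have "\<dots> = d (\<one> \<otimes> h) (g \<otimes> inv h \<otimes> h)"
    using binv[of h "\<one>" "g \<otimes> inv h"] assms by simp
  also have "\<dots> = d h g" using assms by (simp add: m_assoc)
  finally show ?thesis using dm.commute assms by simp
qed

lemma act_Lip: assumes "Lip f" "g \<in> carrier K" shows "Lip (act g f)"
  unfolding Lip_def
proof (intro ballI)
  fix k k' w assume k: "k \<in> carrier K" "k' \<in> carrier K" "w \<in> W"
  have "\<bar>f (inv g \<otimes> k, w) - f (inv g \<otimes> k', w)\<bar> \<le> L * d (inv g \<otimes> k) (inv g \<otimes> k')"
    using assms k unfolding Lip_def by simp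
  also have "\<dots> = L * d k k'" using binv k assms by simp
  finally show "\<bar>act g f (k, w) - act g f (k', w)\<bar> \<le> L * d k k'"
    using k by (simp add: act_def I_def)
qed

lemma act_move: assumes "Lip f" "f \<in> F" "g \<in> carrier K" "h \<in> carrier K"
  shows "D (act g f) (act h f) \<le> L * d g h"
proof (rule fdist_le[OF act_F[OF assms(2,3)] act_F[OF assms(2,4)] I_ne])
  fix x assume x: "x \<in> I"
  obtain k w where kw: "x = (k,w)" "k \<in> carrier K" "w \<in> W" using x by (auto simp: I_def)
  have "\<bar>f (inv g \<otimes> k, w) - f (inv h \<otimes> k, w)\<bar> \<le> L * d (inv g \<otimes> k) (inv h \<otimes> k)"
    using assms kw unfolding Lip_def by simp
  also have "\<dots> = L * d g h" using binv kw assms d_inv by simp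
  finally show "dist (act g f x) (act h f x) \<le> L * d g h"
    using kw x by (simp add: act_def dist_real_def)
qed


lemma C_pos: "C > 0" using B1 dpos by (simp add: C_def)
lemma Gam_sub: "\<Gamma> \<subseteq> carrier K" using sub by (rule subgroup.subset)
lemma one_Gam: "\<one> \<in> \<Gamma>" using sub by (rule subgroup.one_closed)
lemma inv_Gam: "\<gamma> \<in> \<Gamma> \<Longrightarrow> inv \<gamma> \<in> \<Gamma>" using sub by (rule subgroup.m_inv_closed)
lemma mult_Gam: "\<gamma> \<in> \<Gamma> \<Longrightarrow> \<eta> \<in> \<Gamma> \<Longrightarrow> \<gamma> \<otimes> \<eta> \<in> \<Gamma>" using sub by (rule subgroup.m_closed)
lemma Gam_G: "\<gamma> \<in> \<Gamma> \<Longrightarrow> \<gamma> \<in> carrier K" using Gam_sub by blast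

lemma phi_comp: "\<gamma> \<in> \<Gamma> \<Longrightarrow> \<eta> \<in> \<Gamma> \<Longrightarrow> z \<in> Z \<Longrightarrow> \<phi> (\<gamma> \<otimes> \<eta>) z = \<phi> \<gamma> (\<phi> \<eta> z)"
  using group_action.composition_rule[OF ga, of z \<gamma> \<eta>] by simp
lemma phi_Z: "\<gamma> \<in> \<Gamma> \<Longrightarrow> z \<in> Z \<Longrightarrow> \<phi> \<gamma> z \<in> Z"
  using group_action.element_image[OF ga, of \<gamma> z] by simp
lemma phi_one: "z \<in> Z \<Longrightarrow> \<phi> \<one> z = z"
  using fun_cong[OF group_action.id_eq_one[OF ga], of z] by simp
lemma phi_iso: "\<gamma> \<in> \<Gamma> \<Longrightarrow> x \<in> Z \<Longrightarrow> y \<in> Z \<Longrightarrow> dZ (\<phi> \<gamma> x) (\<phi> \<gamma> y) = dZ x y"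
  using iso by (simp add: isometric_action_def)

definition "hz z k w = (INF \<gamma>\<in>\<Gamma>. C * d k \<gamma> + dZ (\<phi> (inv \<gamma>) z) w)"

lemma term_nonneg: "k \<in> carrier K \<Longrightarrow> z \<in> Z \<Longrightarrow> w \<in> Z \<Longrightarrow> \<gamma> \<in> \<Gamma> \<Longrightarrow>
   0 \<le> C * d k \<gamma> + dZ (\<phi> (inv \<gamma>) z) w"
  using C_pos dm.nonneg zm.nonneg by (simp add: add_nonneg_nonneg)

lemma hz_bdd: "k \<in> carrier K \<Longrightarrow> z \<in> Z \<Longrightarrow> w \<in> Z \<Longrightarrow>
   bdd_below ((\<lambda>\<gamma>. C * d k \<gamma> + dZ (\<phi> (inv \<gamma>) z) w) ` \<Gamma>)"
  by (rule bdd_belowI2[where m=0]) (rule term_nonneg)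

lemma hz_le: "k \<in> carrier K \<Longrightarrow> z \<in> Z \<Longrightarrow> w \<in> Z \<Longrightarrow> \<gamma> \<in> \<Gamma> \<Longrightarrow>
   hz z k w \<le> C * d k \<gamma> + dZ (\<phi> (inv \<gamma>) z) w"
  unfolding hz_def by (rule cINF_lower[OF hz_bdd])

lemma hz_ge: "(\<And>\<gamma>. \<gamma> \<in> \<Gamma> \<Longrightarrow> c \<le> C * d k \<gamma> + dZ (\<phi> (inv \<gamma>) z) w) \<Longrightarrow> c \<le> hz z k w"
  unfolding hz_def using one_Gam by (intro cINF_greatest) auto

lemma hz_nonneg: "k \<in> carrier K \<Longrightarrow> z \<in> Z \<Longrightarrow> w \<in> Z \<Longrightarrow> 0 \<le> hz z k w"
  by (rule hz_ge) (rule term_nonneg)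

lemma hz_lipz: assumes "k \<in> carrier K" "z \<in> Z" "z' \<in> Z" "w \<in> Z"
  shows "hz z k w \<le> hz z' k w + dZ z z'"
proof -
  have "hz z k w - dZ z z' \<le> hz z' k w"
  proof (rule hz_ge)
    fix \<gamma> assume g: "\<gamma> \<in> \<Gamma>"
    have ig: "inv \<gamma> \<in> \<Gamma>" using inv_Gam g .
    have "hz z k w \<le> C * d k \<gamma> + dZ (\<phi> (inv \<gamma>) z) w" by (rule hz_le[OF assms(1,2,4) g])
    moreover have "dZ (\<phi> (inv \<gamma>) z) w \<le> dZ (\<phi> (inv \<gamma>) z) (\<phi> (inv \<gamma>) z') + dZ (\<phi> (inv \<gamma>) z') w"
      using phi_Z[OF ig] assms by (intro zm.triangle) auto
    moreover have "dZ (\<phi> (inv \<gamma>) z) (\<phi> (inv \<gamma>) z') = dZ z z'" using phi_iso[OF ig] assms by simp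
    ultimately show "hz z k w - dZ z z' \<le> C * d k \<gamma> + dZ (\<phi> (inv \<gamma>) z') w" by linarith
  qed
  then show ?thesis by linarith
qed

lemma hz_lipk: assumes "k \<in> carrier K" "k' \<in> carrier K" "z \<in> Z" "w \<in> Z"
  shows "hz z k w \<le> hz z k' w + C * d k k'"
proof -
  have "hz z k w - C * d k k' \<le> hz z k' w"
  proof (rule hz_ge)
    fix \<gamma> assume g: "\<gamma> \<in> \<Gamma>"
    have "hz z k w \<le> C * d k \<gamma> + dZ (\<phi> (inv \<gamma>) z) w" by (rule hz_le[OF assms(1,3,4) g])
    moreover have "d k \<gamma> \<le> d k k' + d k' \<gamma>" using assms Gam_G[OF g] by (intro dm.triangle) auto
    then have "C * d k \<gamma> \<le> C * d k k' + C * d k' \<gamma>" using C_pos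
      by (metis distrib_left mult_le_cancel_left_pos)
    ultimately show "hz z k w - C * d k k' \<le> C * d k' \<gamma> + dZ (\<phi> (inv \<gamma>) z) w" by linarith
  qed
  then show ?thesis by linarith
qed

lemma hz_self: assumes "z \<in> Z" shows "hz z \<one> z = 0"
proof -
  have "hz z \<one> z \<le> C * d \<one> \<one> + dZ (\<phi> (inv \<one>) z) z"
    using assms one_Gam by (intro hz_le) auto
  also have "\<dots> = 0" using assms by (simp add: phi_one)
  finally show ?thesis using hz_nonneg[of \<one> z z] assms by simp
qed

lemma hz_other: assumes "z \<in> Z" "z' \<in> Z" shows "hz z' \<one> z = dZ z' z"
proof -
  have "hz z' \<one> z \<le> C * d \<one> \<one> + dZ (\<phi> (inv \<one>) z') z"
    using assms one_Gam by (intro hz_le) auto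
  also have "\<dots> = dZ z' z" using assms by (simp add: phi_one)
  finally have le: "hz z' \<one> z \<le> dZ z' z" .
  have "dZ z' z \<le> hz z' \<one> z"
  proof (rule hz_ge)
    fix \<gamma> assume g: "\<gamma> \<in> \<Gamma>"
    show "dZ z' z \<le> C * d \<one> \<gamma> + dZ (\<phi> (inv \<gamma>) z') z"
    proof (cases "\<gamma> = \<one>")
      case True then show ?thesis using assms by (simp add: phi_one)
    next
      case False
      then have "\<delta> \<le> d \<one> \<gamma>" using disc[OF g] by force
      then have "C * \<delta> \<le> C * d \<one> \<gamma>" using C_pos by simp
      moreover have "C * \<delta> = B" using dpos by (simp add: C_def)
      moreover have "dZ z' z \<le> B" using Bb assms by simp
      moreover have "0 \<le> dZ (\<phi> (inv \<gamma>) z') z" using zm.nonneg by simp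
      ultimately show ?thesis by linarith
    qed
  qed
  with le show ?thesis by simp
qed

lemma hz_equiv: assumes "\<eta> \<in> \<Gamma>" "k \<in> carrier K" "z \<in> Z" "w \<in> Z"
  shows "hz (\<phi> \<eta> z) k w = hz z (inv \<eta> \<otimes> k) w"
proof -
  have eG: "\<eta> \<in> carrier K" using Gam_G assms by simp
  have img: "(\<lambda>\<gamma>'. inv \<eta> \<otimes> \<gamma>') ` \<Gamma> = \<Gamma>"
  proof
    show "(\<lambda>\<gamma>'. inv \<eta> \<otimes> \<gamma>') ` \<Gamma> \<subseteq> \<Gamma>" using assms inv_Gam mult_Gam by auto
    show "\<Gamma> \<subseteq> (\<lambda>\<gamma>'. inv \<eta> \<otimes> \<gamma>') ` \<Gamma>"
    proof
      fix \<gamma> assume g: "\<gamma> \<in> \<Gamma>"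
      have "\<gamma> = inv \<eta> \<otimes> (\<eta> \<otimes> \<gamma>)" using eG Gam_G[OF g] by (simp add: m_assoc[symmetric])
      then show "\<gamma> \<in> (\<lambda>\<gamma>'. inv \<eta> \<otimes> \<gamma>') ` \<Gamma>" using mult_Gam[OF assms(1) g] by blast
    qed
  qed
  have "hz z (inv \<eta> \<otimes> k) w = Inf ((\<lambda>\<gamma>. C * d (inv \<eta> \<otimes> k) \<gamma> + dZ (\<phi> (inv \<gamma>) z) w) ` ((\<lambda>\<gamma>'. inv \<eta> \<otimes> \<gamma>') ` \<Gamma>))"
    unfolding hz_def img ..
  also have "\<dots> = Inf ((\<lambda>\<gamma>'. C * d (inv \<eta> \<otimes> k) (inv \<eta> \<otimes> \<gamma>') + dZ (\<phi> (inv (inv \<eta> \<otimes> \<gamma>')) z) w) ` \<Gamma>)"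
    by (simp add: image_comp o_def)
  also have "\<dots> = Inf ((\<lambda>\<gamma>'. C * d k \<gamma>' + dZ (\<phi> (inv \<gamma>') (\<phi> \<eta> z)) w) ` \<Gamma>)"
  proof (rule arg_cong[where f=Inf], rule image_cong[OF refl])
    fix \<gamma>' assume g: "\<gamma>' \<in> \<Gamma>"
    have gG: "\<gamma>' \<in> carrier K" using Gam_G g .
    have "d (inv \<eta> \<otimes> k) (inv \<eta> \<otimes> \<gamma>') = d k \<gamma>'" using binv eG gG assms by simp
    moreover have "inv (inv \<eta> \<otimes> \<gamma>') = inv \<gamma>' \<otimes> \<eta>" using eG gG by (simp add: inv_mult_group)
    moreover have "\<phi> (inv \<gamma>' \<otimes> \<eta>) z = \<phi> (inv \<gamma>') (\<phi> \<eta> z)"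
      using phi_comp inv_Gam g assms by simp
    ultimately show "C * d (inv \<eta> \<otimes> k) (inv \<eta> \<otimes> \<gamma>') + dZ (\<phi> (inv (inv \<eta> \<otimes> \<gamma>')) z) w =
        C * d k \<gamma>' + dZ (\<phi> (inv \<gamma>') (\<phi> \<eta> z)) w" by simp
  qed
  also have "\<dots> = hz (\<phi> \<eta> z) k w" unfolding hz_def ..
  finally show ?thesis ..
qed


definition "e z = (\<lambda>x\<in>I. case snd x of None \<Rightarrow> 0 | Some w \<Rightarrow> min B (hz z (fst x) w))"
definition "u = (\<lambda>x\<in>I. case snd x of None \<Rightarrow> min 1 (d (fst x) \<one>) | Some w \<Rightarrow> 0)"

lemma min_lip: "\<bar>min (B::real) a - min B b\<bar> \<le> \<bar>a - b\<bar>"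
  by (simp add: min_def abs_if)

lemma W_cases: "w \<in> W \<Longrightarrow> w = None \<or> (\<exists>v. w = Some v \<and> v \<in> Z)"
  by (auto simp: W_def)

lemma e_val: "k \<in> carrier K \<Longrightarrow> e z (k, None) = 0"
  "k \<in> carrier K \<Longrightarrow> w \<in> Z \<Longrightarrow> e z (k, Some w) = min B (hz z k w)"
  by (auto simp: e_def I_def W_def)

lemma u_val: "k \<in> carrier K \<Longrightarrow> u (k, None) = min 1 (d k \<one>)"
  "k \<in> carrier K \<Longrightarrow> w \<in> Z \<Longrightarrow> u (k, Some w) = 0"
  by (auto simp: u_def I_def W_def)

lemma e_ext: "e z \<in> extensional I" by (simp add: e_def)
lemma u_ext: "u \<in> extensional I" by (simp add: u_def)

lemma e_Bnd: assumes "z \<in> Z" shows "Bnd (e z)"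
  unfolding Bnd_def
proof
  fix x assume "x \<in> I"
  then obtain k w where x: "x = (k,w)" "k \<in> carrier K" "w \<in> W" by (auto simp: I_def)
  show "\<bar>e z x\<bar> \<le> B"
    using W_cases[OF x(3)] x B1 e_val hz_nonneg[OF x(2) assms] by auto
qed

lemma u_Bnd: "Bnd u"
  unfolding Bnd_def
proof
  fix x assume "x \<in> I"
  then obtain k w where x: "x = (k,w)" "k \<in> carrier K" "w \<in> W" by (auto simp: I_def)
  show "\<bar>u x\<bar> \<le> B"
    using W_cases[OF x(3)] x B1 u_val dm.nonneg[of k \<one>] by auto
qed

lemma e_F: "z \<in> Z \<Longrightarrow> e z \<in> F" using BndF e_ext e_Bnd by blast
lemma u_F: "u \<in> F" using BndF u_ext u_Bnd by blast

lemma e_Lip: assumes "z \<in> Z" shows "Lip (e z)"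
  unfolding Lip_def
proof (intro ballI)
  fix k k' w assume k: "k \<in> carrier K" "k' \<in> carrier K" "w \<in> W"
  have dk: "0 \<le> d k k'" by simp
  show "\<bar>e z (k, w) - e z (k', w)\<bar> \<le> L * d k k'"
  proof (cases "w = None")
    case True then show ?thesis using k e_val L_ge dk by simp
  next
    case False
    then obtain v where v: "w = Some v" "v \<in> Z" using W_cases k(3) by blast
    have "hz z k' v \<le> hz z k v + C * d k k'"
      using hz_lipk[OF k(2,1) assms v(2)] dm.commute[of k' k] by simp
    then have "\<bar>hz z k v - hz z k' v\<bar> \<le> C * d k k'"
      using hz_lipk[OF k(1,2) assms v(2)] by linarith
    moreover have "C * d k k' \<le> L * d k k'" using L_ge dk by (simp add: mult_right_mono)
    ultimately show ?thesis using min_lip[of "hz z k v" "hz z k' v"] e_val k v by simp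
  qed
qed

lemma u_Lip: "Lip u"
  unfolding Lip_def
proof (intro ballI)
  fix k k' w assume k: "k \<in> carrier K" "k' \<in> carrier K" "w \<in> W"
  have dk: "0 \<le> d k k'" by simp
  show "\<bar>u (k, w) - u (k', w)\<bar> \<le> L * d k k'"
  proof (cases "w = None")
    case True
    have "\<bar>d k \<one> - d k' \<one>\<bar> \<le> d k k'"
      using dm.mdist_reverse_triangle[of k \<one> k'] k dm.commute[of k' \<one>] by simp
    moreover have "d k k' \<le> L * d k k'" using mult_right_mono[OF L_ge(1) dk] by simp
    ultimately show ?thesis using True k u_val min_lip[of "d k \<one>" "d k' \<one>" ] 
      by (smt (verit) min_def)
  next
    case False
    then obtain v where v: "w = Some v" "v \<in> Z" using W_cases k(3) by blast
    then show ?thesis using k u_val L_ge dk by simp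
  qed
qed

lemma e_iso: assumes "z \<in> Z" "z' \<in> Z" shows "D (e z) (e z') = dZ z z'"
proof (rule antisym)
  show "D (e z) (e z') \<le> dZ z z'"
  proof (rule fdist_le[OF e_F[OF assms(1)] e_F[OF assms(2)] I_ne])
    fix x assume "x \<in> I"
    then obtain k w where x: "x = (k,w)" "k \<in> carrier K" "w \<in> W" by (auto simp: I_def)
    show "dist (e z x) (e z' x) \<le> dZ z z'"
    proof (cases "w = None")
      case True then show ?thesis using x e_val by simp
    next
      case False
      then obtain v where v: "w = Some v" "v \<in> Z" using W_cases x(3) by blast
      have "\<bar>hz z k v - hz z' k v\<bar> \<le> dZ z z'"
        using hz_lipz[OF x(2) assms v(2)] hz_lipz[OF x(2) assms(2,1) v(2)] zm.commute[of z z'] by linarith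
      then show ?thesis using min_lip[of "hz z k v" "hz z' k v"] e_val x v by (simp add: dist_real_def)
    qed
  qed
  have xI: "(\<one>, Some z) \<in> I" using assms by (simp add: I_def W_def)
  have "dist (e z (\<one>, Some z)) (e z' (\<one>, Some z)) = dZ z z'"
    using e_val hz_self hz_other assms B1 Bb[OF assms(2,1)] zm.commute[of z z'] zm.nonneg[of z z']
    by (simp add: dist_real_def)
  then show "dZ z z' \<le> D (e z) (e z')"
    using fdist_ge[OF e_F[OF assms(1)] e_F[OF assms(2)] xI] by simp
qed

lemma e_equiv: assumes "\<eta> \<in> \<Gamma>" "z \<in> Z" shows "e (\<phi> \<eta> z) = act \<eta> (e z)"
proof (rule ext)
  fix x
  show "e (\<phi> \<eta> z) x = act \<eta> (e z) x"
  proof (cases "x \<in> I")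
    case False then show ?thesis by (simp add: e_def act_def)
  next
    case True
    then obtain k w where x: "x = (k,w)" "k \<in> carrier K" "w \<in> W" by (auto simp: I_def)
    have eG: "\<eta> \<in> carrier K" using Gam_G assms by simp
    have k2: "inv \<eta> \<otimes> k \<in> carrier K" using eG x by simp
    have "act \<eta> (e z) x = e z (inv \<eta> \<otimes> k, w)" using True x by (simp add: act_def)
    moreover have "e z (inv \<eta> \<otimes> k, w) = e (\<phi> \<eta> z) (k, w)"
    proof (cases "w = None")
      case True then show ?thesis using x k2 e_val by simp
    next
      case False
      then obtain v where v: "w = Some v" "v \<in> Z" using W_cases x(3) by blast
      then show ?thesis using x k2 e_val hz_equiv[OF assms(1) x(2) assms(2) v(2)] phi_Z assms by simp
    qed
    ultimately show ?thesis using x by simp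
  qed
qed

lemma u_faith: assumes "g \<in> carrier K" "h \<in> carrier K" "act g u = act h u" shows "g = h"
proof -
  have xI: "(g, None) \<in> I" using assms by (simp add: I_def W_def)
  have "act g u (g, None) = u (inv g \<otimes> g, None)" using xI unfolding act_def by simp
  also have "\<dots> = 0" using u_val(1)[of \<one>] assms(1) by simp
  finally have "act g u (g, None) = 0" .
  moreover have "act h u (g, None) = u (inv h \<otimes> g, None)" using xI unfolding act_def by simp
  moreover have "u (inv h \<otimes> g, None) = min 1 (d (inv h \<otimes> g) \<one>)" using u_val(1) assms(1,2) by simp
  moreover have "act g u (g, None) = act h u (g, None)" using assms(3) by (rule fun_cong)
  ultimately have "min 1 (d (inv h \<otimes> g) \<one>) = 0" by simp
  then have "d (inv h \<otimes> g) \<one> = 0" by (simp add: min_def split: if_splits)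
  then have 1: "inv h \<otimes> g = \<one>" using assms dm.zero[of "inv h \<otimes> g" \<one>] by simp
  have "g = h \<otimes> (inv h \<otimes> g)" using assms by (simp add: m_assoc[symmetric])
  then show ?thesis using 1 assms by simp
qed


sublocale fm: Metric_space F D by (rule Fmet)

definition "S = {act g (e z) | g z. g \<in> carrier K \<and> z \<in> Z} \<union> {act g u | g. g \<in> carrier K}"
definition "Y0 = fm.mtopology closure_of S"

lemma S_cases: "s \<in> S \<Longrightarrow> (\<exists>g z. g \<in> carrier K \<and> z \<in> Z \<and> s = act g (e z)) \<or> (\<exists>g. g \<in> carrier K \<and> s = act g u)"
  by (auto simp: S_def)

lemma S_props: assumes "s \<in> S" shows "s \<in> F" "Lip s" "Bnd s"
  using S_cases[OF assms] act_F e_F u_F act_Lip e_Lip u_Lip act_Bnd e_Bnd u_Bnd by auto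

lemma S_sub: "S \<subseteq> F" using S_props by blast

lemma Y0_mem: "f \<in> Y0 \<longleftrightarrow> f \<in> F \<and> (\<forall>r>0. \<exists>s\<in>S. D f s < r)"
  unfolding Y0_def fm.metric_closure_of using S_sub by (simp add: fm.in_mball) blast

lemma Y0_sub: "Y0 \<subseteq> F" using Y0_mem by blast

lemma S_Y0: "S \<subseteq> Y0" using Y0_mem S_sub fm.mdist_zero by fastforce

lemma Y0_approx: assumes "f \<in> Y0" "r > 0" obtains s where "s \<in> S" "\<And>x. x \<in> I \<Longrightarrow> \<bar>f x - s x\<bar> < r"
proof -
  obtain s where s: "s \<in> S" "D f s < r" using assms Y0_mem by blast
  have "\<And>x. x \<in> I \<Longrightarrow> \<bar>f x - s x\<bar> < r"
    using fdist_ge[of f I s] Y0_sub assms(1) S_sub s by (force simp: dist_real_def)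
  with s(1) that show ?thesis by blast
qed

lemma Y0_Lip: assumes "f \<in> Y0" shows "Lip f"
  unfolding Lip_def
proof (intro ballI)
  fix k k' w assume k: "k \<in> carrier K" "k' \<in> carrier K" "w \<in> W"
  have kI: "(k,w) \<in> I" "(k',w) \<in> I" using k by (auto simp: I_def)
  show "\<bar>f (k, w) - f (k', w)\<bar> \<le> L * d k k'"
  proof (rule field_le_epsilon)
    fix r :: real assume r: "r > 0"
    then obtain s where s: "s \<in> S" "\<And>x. x \<in> I \<Longrightarrow> \<bar>f x - s x\<bar> < r/2"
      using Y0_approx[OF assms, of "r/2"] by auto
    have "\<bar>s (k, w) - s (k', w)\<bar> \<le> L * d k k'" using S_props(2)[OF s(1)] k unfolding Lip_def by blast
    with s(2)[OF kI(1)] s(2)[OF kI(2)] show "\<bar>f (k, w) - f (k', w)\<bar> \<le> L * d k k' + r" by linarith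
  qed
qed

lemma Y0_Bnd: assumes "f \<in> Y0" shows "Bnd f"
  unfolding Bnd_def
proof
  fix x assume x: "x \<in> I"
  show "\<bar>f x\<bar> \<le> B"
  proof (rule field_le_epsilon)
    fix r :: real assume r: "r > 0"
    then obtain s where s: "s \<in> S" "\<And>x. x \<in> I \<Longrightarrow> \<bar>f x - s x\<bar> < r"
      using Y0_approx[OF assms] by auto
    have "\<bar>s x\<bar> \<le> B" using S_props(3)[OF s(1)] x unfolding Bnd_def by blast
    with s(2)[OF x] show "\<bar>f x\<bar> \<le> B + r" by linarith
  qed
qed

lemma act_S: assumes "s \<in> S" "g \<in> carrier K" shows "act g s \<in> S"
  using S_cases[OF assms(1)]
proof
  assume "\<exists>h z. h \<in> carrier K \<and> z \<in> Z \<and> s = act h (e z)"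
  then obtain h z where h: "h \<in> carrier K" "z \<in> Z" "s = act h (e z)" by blast
  then have "act g s = act (g \<otimes> h) (e z)" using assms act_comp[of g h] by simp
  moreover have "g \<otimes> h \<in> carrier K" using h assms by simp
  ultimately show ?thesis using h unfolding S_def by blast
next
  assume "\<exists>h. h \<in> carrier K \<and> s = act h u"
  then obtain h where h: "h \<in> carrier K" "s = act h u" by blast
  then have "act g s = act (g \<otimes> h) u" using assms act_comp[of g h] by simp
  moreover have "g \<otimes> h \<in> carrier K" using h assms by simp
  ultimately show ?thesis unfolding S_def by blast
qed

lemma act_Y0: assumes "f \<in> Y0" "g \<in> carrier K" shows "act g f \<in> Y0"
proof -
  have fF: "f \<in> F" using assms Y0_sub by blast
  have "\<exists>s\<in>S. D (act g f) s < r" if "r > 0" for r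
  proof -
    obtain s where s: "s \<in> S" "D f s < r" using assms(1) Y0_mem \<open>r>0\<close> by blast
    then have "D (act g f) (act g s) < r" using act_iso[OF fF S_sub[THEN subsetD, OF s(1)] assms(2)] by simp
    with act_S[OF s(1) assms(2)] show ?thesis by blast
  qed
  then show ?thesis using Y0_mem act_F[OF fF assms(2)] by blast
qed

lemma Y0_closed: "closedin fm.mtopology Y0"
  unfolding Y0_def by simp

lemma Y0_complete: "Metric_space.mcomplete Y0 D"
proof -
  interpret sm: Submetric F D Y0 by unfold_locales (rule Y0_sub)
  show ?thesis using sm.closedin_mcomplete_imp_mcomplete[OF Y0_closed mcomplete_F] .
qed

lemma Y0_bounded: assumes "f \<in> Y0" "f' \<in> Y0" shows "D f f' \<le> 2 * B"
proof (rule fdist_le)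
  show "f \<in> F" "f' \<in> F" using assms Y0_sub by auto
  show "I \<noteq> {}" by (rule I_ne)
  fix x assume "x \<in> I"
  then show "dist (f x) (f' x) \<le> 2 * B"
    using Y0_Bnd[OF assms(1)] Y0_Bnd[OF assms(2)] unfolding Bnd_def dist_real_def by force
qed

lemma act_cont: assumes "f \<in> Y0" "f' \<in> Y0" "g \<in> carrier K" "h \<in> carrier K"
  shows "D (act g f) (act h f') \<le> L * d g h + D f f'"
proof -
  have fF: "f \<in> F" "f' \<in> F" using assms Y0_sub by auto
  have "D (act g f) (act h f') \<le> D (act g f) (act h f) + D (act h f) (act h f')"
    using act_F fF assms by (intro fm.triangle) auto
  also have "\<dots> \<le> L * d g h + D f f'"
    using act_move[OF Y0_Lip[OF assms(1)] fF(1) assms(3,4)] act_iso[OF fF assms(4)] by simp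
  finally show ?thesis .
qed


lemma Y0_sep:
  assumes Gc: "countable Gc" "Gc \<subseteq> carrier K" "\<And>g r. g \<in> carrier K \<Longrightarrow> r > 0 \<Longrightarrow> \<exists>c\<in>Gc. d g c < r"
    and Zc: "countable Zc" "Zc \<subseteq> Z" "\<And>z r. z \<in> Z \<Longrightarrow> r > 0 \<Longrightarrow> \<exists>c\<in>Zc. dZ z c < r"
  shows "\<exists>CC. countable CC \<and> CC \<subseteq> Y0 \<and> (\<forall>f\<in>Y0. \<forall>r>0. \<exists>c\<in>CC. D f c < r)"
proof (intro exI conjI)
  define CC where "CC = (\<lambda>(g,z). act g (e z)) ` (Gc \<times> Zc) \<union> (\<lambda>g. act g u) ` Gc"
  show "countable CC" unfolding CC_def using Gc Zc by auto
  have CCS: "CC \<subseteq> S"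
  proof
    fix c assume "c \<in> CC"
    then consider g z where "g \<in> Gc" "z \<in> Zc" "c = act g (e z)" | g where "g \<in> Gc" "c = act g u"
      unfolding CC_def by auto
    then show "c \<in> S"
    proof cases
      case 1 then show ?thesis using Gc(2) Zc(2) unfolding S_def by blast
    next
      case 2 then show ?thesis using Gc(2) unfolding S_def by blast
    qed
  qed
  then show "CC \<subseteq> Y0" using S_Y0 by blast
  have Lpos: "L > 0" using L_ge by simp
  show "\<forall>f\<in>Y0. \<forall>r>0. \<exists>c\<in>CC. D f c < r"
  proof (intro ballI allI impI)
    fix f and r :: real assume f: "f \<in> Y0" and r: "r > 0"
    have fF: "f \<in> F" using f Y0_sub by blast
    obtain s where s: "s \<in> S" "D f s < r/3" using f Y0_mem r by (meson divide_pos_pos zero_less_numeral)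
    have sF: "s \<in> F" using s S_sub by blast
    have "\<exists>c\<in>CC. D s c < 2*r/3"
      using S_cases[OF s(1)]
    proof
      assume "\<exists>g z. g \<in> carrier K \<and> z \<in> Z \<and> s = act g (e z)"
      then obtain g z where gz: "g \<in> carrier K" "z \<in> Z" "s = act g (e z)" by blast
      obtain g' where g': "g' \<in> Gc" "d g g' < r/(3*L)" using Gc(3)[OF gz(1), of "r/(3*L)"] r Lpos by auto
      obtain z' where z': "z' \<in> Zc" "dZ z z' < r/3" using Zc(3)[OF gz(2), of "r/3"] r by auto
      have g'G: "g' \<in> carrier K" using g' Gc by blast
      have z'Z: "z' \<in> Z" using z' Zc by blast
      have "D s (act g' (e z')) \<le> D (act g (e z)) (act g' (e z)) + D (act g' (e z)) (act g' (e z'))"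
        unfolding gz(3) using gz(1,2) act_F e_F g'G z'Z by (intro fm.triangle) auto
      also have "\<dots> \<le> L * d g g' + dZ z z'"
        using act_move[OF e_Lip[OF gz(2)] e_F[OF gz(2)] gz(1) g'G] act_iso[OF e_F[OF gz(2)] e_F[OF z'Z] g'G]
          e_iso[OF gz(2) z'Z] by simp
      also have "L * d g g' < r/3" using g'(2) Lpos by (simp add: field_simps)
      finally have "D s (act g' (e z')) < 2*r/3" using z'(2) by linarith
      moreover have "act g' (e z') \<in> CC" unfolding CC_def using g' z' by force
      ultimately show ?thesis by blast
    next
      assume "\<exists>g. g \<in> carrier K \<and> s = act g u"
      then obtain g where gz: "g \<in> carrier K" "s = act g u" by blast
      obtain g' where g': "g' \<in> Gc" "d g g' < r/(3*L)" using Gc(3)[OF gz(1), of "r/(3*L)"] r Lpos by auto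
      have g'G: "g' \<in> carrier K" using g' Gc by blast
      have "D s (act g' u) \<le> L * d g g'"
        using act_move[OF u_Lip u_F gz(1) g'G] gz by simp
      also have "L * d g g' < r/3" using g'(2) Lpos by (simp add: field_simps)
      finally have "D s (act g' u) < 2*r/3" using r by linarith
      moreover have "act g' u \<in> CC" unfolding CC_def using g' by force
      ultimately show ?thesis by blast
    qed
    then obtain c where c: "c \<in> CC" "D s c < 2*r/3" by blast
    have "D f c \<le> D f s + D s c" using fF sF c CCS S_sub by (intro fm.triangle) auto
    with s(2) c(2) have "D f c < r" by linarith
    with c(1) show "\<exists>c\<in>CC. D f c < r" by blast
  qed
qed

end



lemma tr_metric:
  assumes ms: "Metric_space M dd" and inj: "inj_on \<iota> M"
  shows "Metric_space (\<iota> ` M) (\<lambda>a b. dd (inv_into M \<iota> a) (inv_into M \<iota> b))"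
proof -
  interpret m: Metric_space M dd by (rule ms)
  show ?thesis
  proof
    fix x y z
    show "0 \<le> dd (inv_into M \<iota> x) (inv_into M \<iota> y)" by simp
    show "dd (inv_into M \<iota> x) (inv_into M \<iota> y) = dd (inv_into M \<iota> y) (inv_into M \<iota> x)" by (rule m.commute)
    assume x: "x \<in> \<iota> ` M" and y: "y \<in> \<iota> ` M"
    have jx: "inv_into M \<iota> x \<in> M" "\<iota> (inv_into M \<iota> x) = x" using x by (auto intro: inv_into_into f_inv_into_f)
    have jy: "inv_into M \<iota> y \<in> M" "\<iota> (inv_into M \<iota> y) = y" using y by (auto intro: inv_into_into f_inv_into_f)
    show "(dd (inv_into M \<iota> x) (inv_into M \<iota> y) = 0) = (x = y)"
      using jx jy by (metis m.zero)
    assume z: "z \<in> \<iota> ` M"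
    have jz: "inv_into M \<iota> z \<in> M" using z by (auto intro: inv_into_into)
    show "dd (inv_into M \<iota> x) (inv_into M \<iota> z) \<le> dd (inv_into M \<iota> x) (inv_into M \<iota> y) + dd (inv_into M \<iota> y) (inv_into M \<iota> z)"
      using jx jy jz by (intro m.triangle)
  qed
qed

lemma tr_complete:
  assumes ms: "Metric_space M dd" and inj: "inj_on \<iota> M" and c: "Metric_space.mcomplete M dd"
  shows "Metric_space.mcomplete (\<iota> ` M) (\<lambda>a b. dd (inv_into M \<iota> a) (inv_into M \<iota> b))"
proof -
  interpret m: Metric_space M dd by (rule ms)
  interpret t: Metric_space "\<iota> ` M" "\<lambda>a b. dd (inv_into M \<iota> a) (inv_into M \<iota> b)" by (rule tr_metric[OF ms inj])
  show ?thesis unfolding t.mcomplete_def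
  proof (intro allI impI)
    fix \<sigma> assume s: "t.MCauchy \<sigma>"
    define \<tau> where "\<tau> n = inv_into M \<iota> (\<sigma> n)" for n
    have "\<tau> n \<in> M" for n
    proof -
      have "\<sigma> n \<in> \<iota> ` M" using s unfolding t.MCauchy_def by blast
      then show ?thesis unfolding \<tau>_def by (rule inv_into_into)
    qed
    then have "range \<tau> \<subseteq> M" by blast
    then have "m.MCauchy \<tau>" using s unfolding t.MCauchy_def m.MCauchy_def \<tau>_def by blast
    then obtain l where l: "limitin m.mtopology \<tau> l sequentially" using c unfolding m.mcomplete_def by blast
    have "limitin t.mtopology \<sigma> (\<iota> l) sequentially"
      unfolding t.limit_metric_sequentially
    proof (intro conjI allI impI)
      show "\<iota> l \<in> \<iota> ` M" using l m.limit_metric_sequentially by blast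
      then have jl: "inv_into M \<iota> (\<iota> l) = l" using inj l m.limit_metric_sequentially by (meson inv_into_f_f)
      fix \<epsilon> :: real assume "\<epsilon> > 0"
      then obtain N where N: "\<forall>n\<ge>N. \<tau> n \<in> M \<and> dd (\<tau> n) l < \<epsilon>" using l m.limit_metric_sequentially by blast
      have "\<forall>n\<ge>N. \<sigma> n \<in> \<iota> ` M" using s unfolding t.MCauchy_def by blast
      then show "\<exists>N. \<forall>n\<ge>N. \<sigma> n \<in> \<iota> ` M \<and> dd (inv_into M \<iota> (\<sigma> n)) (inv_into M \<iota> (\<iota> l)) < \<epsilon>"
        using N jl unfolding \<tau>_def by auto
    qed
    then show "\<exists>x. limitin t.mtopology \<sigma> x sequentially" by blast
  qed
qed

lemma tr_sep:
  assumes ms: "Metric_space M dd" and inj: "inj_on \<iota> M"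
    and CC: "countable CC" "CC \<subseteq> M" "\<forall>f\<in>M. \<forall>r>0. \<exists>c\<in>CC. dd f c < r"
  shows "separable_space (Metric_space.mtopology (\<iota> ` M) (\<lambda>a b. dd (inv_into M \<iota> a) (inv_into M \<iota> b)))"
proof -
  interpret m: Metric_space M dd by (rule ms)
  interpret t: Metric_space "\<iota> ` M" "\<lambda>a b. dd (inv_into M \<iota> a) (inv_into M \<iota> b)" by (rule tr_metric[OF ms inj])
  have "t.mtopology closure_of (\<iota> ` CC) = \<iota> ` M"
  proof -
    have "y \<in> t.mtopology closure_of (\<iota> ` CC)" if y: "y \<in> \<iota> ` M" for y
    proof -
      obtain x where x: "x \<in> M" "y = \<iota> x" using y by blast
      have "\<exists>c\<in>\<iota> ` CC. c \<in> t.mball y r" if "r > 0" for r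
      proof -
        obtain c where c: "c \<in> CC" "dd x c < r" using CC(3) x(1) \<open>r>0\<close> by blast
        have "c \<in> M" using c CC(2) by blast
        then have "\<iota> c \<in> t.mball y r" using x c inj by (simp add: inv_into_f_f)
        then show ?thesis using c by blast
      qed
      then show ?thesis unfolding t.metric_closure_of using y by blast
    qed
    moreover have "t.mtopology closure_of (\<iota> ` CC) \<subseteq> \<iota> ` M"
      using closure_of_subset_topspace[of t.mtopology] by simp
    ultimately show ?thesis by blast
  qed
  then show ?thesis unfolding separable_space_def using CC by (intro exI[of _ "\<iota> ` CC"]) auto
qed

lemma tr_bounded:
  assumes ms: "Metric_space M dd" and inj: "inj_on \<iota> M" and b: "\<And>x y. x \<in> M \<Longrightarrow> y \<in> M \<Longrightarrow> dd x y \<le> bb"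
  shows "Metric_space.mbounded (\<iota> ` M) (\<lambda>a b. dd (inv_into M \<iota> a) (inv_into M \<iota> b)) (\<iota> ` M)"
proof -
  interpret t: Metric_space "\<iota> ` M" "\<lambda>a b. dd (inv_into M \<iota> a) (inv_into M \<iota> b)" by (rule tr_metric[OF ms inj])
  show ?thesis unfolding t.mbounded_alt using b inj by (auto intro!: exI[of _ bb] simp: inv_into_f_f)
qed

lemma exists_inj:
  fixes dd :: "'a \<Rightarrow> 'a \<Rightarrow> real"
  assumes ms: "Metric_space M dd"
    and CC: "countable CC" "CC \<subseteq> M" "\<forall>f\<in>M. \<forall>r>0. \<exists>c\<in>CC. dd f c < r"
  shows "\<exists>\<iota> :: 'a \<Rightarrow> nat \<Rightarrow> real. inj_on \<iota> M"
proof -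
  interpret m: Metric_space M dd by (rule ms)
  define ch where "ch f n = (SOME c. c \<in> CC \<and> dd f c < inverse (real (Suc n)))" for f n
  have ch: "ch f n \<in> CC \<and> dd f (ch f n) < inverse (real (Suc n))" if "f \<in> M" for f n
  proof -
    have pos: "inverse (real (Suc n)) > 0" by simp
    have "\<forall>r>0. \<exists>c\<in>CC. dd f c < r" using CC(3) that by (rule bspec)
    then have "\<exists>c\<in>CC. dd f c < inverse (real (Suc n))" using pos by blast
    then have "\<exists>c. c \<in> CC \<and> dd f c < inverse (real (Suc n))" by blast
    then show ?thesis unfolding ch_def by (rule someI_ex)
  qed
  define \<iota> where "\<iota> f = (\<lambda>n. real (to_nat_on CC (ch f n)))" for f
  have "inj_on \<iota> M"
  proof (rule inj_onI)
    fix f f' assume f: "f \<in> M" "f' \<in> M" and eq: "\<iota> f = \<iota> f'"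
    have same: "ch f n = ch f' n" for n
    proof -
      have "to_nat_on CC (ch f n) = to_nat_on CC (ch f' n)" using fun_cong[OF eq, of n] by (simp add: \<iota>_def)
      moreover have "ch f n \<in> CC" "ch f' n \<in> CC" using ch f by auto
      ultimately show ?thesis using inj_onD[OF inj_on_to_nat_on[OF CC(1)]] by blast
    qed
    have "dd f f' \<le> 0"
    proof (rule field_le_epsilon)
      fix r :: real assume r: "r > 0"
      have "r/2 > 0" using r by simp
      then obtain n where n: "inverse (real (Suc n)) < r/2" using reals_Archimedean by blast
      have cM: "ch f n \<in> M" using ch f CC(2) by blast
      have "dd f f' \<le> dd f (ch f n) + dd (ch f n) f'" using f cM by (intro m.triangle)
      also have "dd (ch f n) f' = dd f' (ch f' n)" unfolding same by (rule m.commute)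
      finally show "dd f f' \<le> 0 + r" using ch[OF f(1), of n] ch[OF f(2), of n] n by linarith
    qed
    then have "dd f f' = 0" using m.nonneg[of f f'] by linarith
    then show "f = f'" using f m.zero by blast
  qed
  then show ?thesis by blast
qed

lemma cont_lemma:
  assumes ma: "Metric_space A da" and my: "Metric_space Y dy" and Lp: "L > 0"
    and into: "\<And>g y. g \<in> A \<Longrightarrow> y \<in> Y \<Longrightarrow> f (g,y) \<in> Y"
    and est: "\<And>g h y y'. g \<in> A \<Longrightarrow> h \<in> A \<Longrightarrow> y \<in> Y \<Longrightarrow> y' \<in> Y \<Longrightarrow> dy (f (g,y)) (f (h,y')) \<le> L * da g h + dy y y'"
  shows "continuous_map (prod_topology (Metric_space.mtopology A da) (Metric_space.mtopology Y dy)) (Metric_space.mtopology Y dy) f"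
proof -
  interpret a: Metric_space A da by (rule ma)
  interpret y: Metric_space Y dy by (rule my)
  show ?thesis unfolding continuous_map
  proof (intro conjI allI impI)
    show "f ` topspace (prod_topology a.mtopology y.mtopology) \<subseteq> topspace y.mtopology" using into by auto
    fix U assume U: "openin y.mtopology U"
    show "openin (prod_topology a.mtopology y.mtopology) {x \<in> topspace (prod_topology a.mtopology y.mtopology). f x \<in> U}"
      unfolding openin_prod_topology_alt
    proof (intro allI impI)
      fix g y assume gy: "(g, y) \<in> {x \<in> topspace (prod_topology a.mtopology y.mtopology). f x \<in> U}"
      then have g: "g \<in> A" and yY: "y \<in> Y" and fU: "f (g,y) \<in> U" by auto
      obtain r where r: "r > 0" "y.mball (f (g,y)) r \<subseteq> U" using U fU unfolding y.openin_mtopology by blast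
      show "\<exists>U' V. openin a.mtopology U' \<and> openin y.mtopology V \<and> g \<in> U' \<and> y \<in> V \<and>
             U' \<times> V \<subseteq> {x \<in> topspace (prod_topology a.mtopology y.mtopology). f x \<in> U}"
      proof (intro exI conjI)
        show "openin a.mtopology (a.mball g (r/(2*L)))" by simp
        show "openin y.mtopology (y.mball y (r/2))" by simp
        show "g \<in> a.mball g (r/(2*L))" using g r Lp by simp
        show "y \<in> y.mball y (r/2)" using yY r by simp
        show "a.mball g (r/(2*L)) \<times> y.mball y (r/2) \<subseteq> {x \<in> topspace (prod_topology a.mtopology y.mtopology). f x \<in> U}"
        proof clarify
          fix h y' assume h: "h \<in> a.mball g (r/(2*L))" and y': "y' \<in> y.mball y (r/2)"
          have hA: "h \<in> A" "da g h < r/(2*L)" using h by auto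
          have y'Y: "y' \<in> Y" "dy y y' < r/2" using y' by auto
          have "dy (f (g,y)) (f (h,y')) \<le> L * da g h + dy y y'" using est g hA yY y'Y by blast
          also have "L * da g h < r/2" using hA(2) Lp by (simp add: field_simps)
          finally have "dy (f (g,y)) (f (h,y')) < r" using y'Y by linarith
          then have "f (h,y') \<in> U" using r into g yY hA y'Y by auto
          then show "(h, y') \<in> topspace (prod_topology a.mtopology y.mtopology) \<and> f (h, y') \<in> U"
            using hA y'Y by simp
        qed
      qed
    qed
  qed
qed




context cnstr begin

lemma e_Y0: "z \<in> Z \<Longrightarrow> e z \<in> Y0"
proof -
  assume z: "z \<in> Z"
  have "act \<one> (e z) = e z" by (rule act_one[OF e_ext])
  then have "e z \<in> S" unfolding S_def using z by force
  then show ?thesis using S_Y0 by blast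
qed

lemma u_Y0: "u \<in> Y0"
proof -
  have "act \<one> u = u" by (rule act_one[OF u_ext])
  then have "u \<in> S" unfolding S_def by force
  then show ?thesis using S_Y0 by blast
qed

lemma Y0_ext: "f \<in> Y0 \<Longrightarrow> f \<in> extensional I"
  using Y0_sub by (auto simp: Met_TC.fspace_def)

lemma final:
  fixes \<iota> :: "('g \<times> 'z option \<Rightarrow> real) \<Rightarrow> nat \<Rightarrow> real"
  assumes inj: "inj_on \<iota> Y0"
    and CC: "countable CC" "CC \<subseteq> Y0" "\<forall>f\<in>Y0. \<forall>r>0. \<exists>c\<in>CC. D f c < r"
  shows "\<exists>(Y :: (nat \<Rightarrow> real) set) dY \<psi> e.
           Polish_metric_space Y dY \<and> bounded_metric_space Y dY \<and>
           faithful_action K Y \<psi> \<and>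
           isometric_action (carrier K) Y dY \<psi> \<and>
           continuous_map (prod_topology dm.mtopology (Metric_space.mtopology Y dY))
                          (Metric_space.mtopology Y dY) (\<lambda>(g, y). \<psi> g y) \<and>
           e \<in> Z \<rightarrow> Y \<and>
           (\<forall>z\<in>Z. \<forall>z'\<in>Z. dY (e z) (e z') = dZ z z') \<and>
           (\<forall>\<gamma>\<in>\<Gamma>. \<forall>z\<in>Z. e (\<phi> \<gamma> z) = \<psi> \<gamma> (e z))"
proof -
  define Y where "Y = \<iota> ` Y0"
  define j where "j = inv_into Y0 \<iota>"
  define dY where "dY a b = D (j a) (j b)" for a b
  define \<psi> where "\<psi> g = (\<lambda>y\<in>Y. \<iota> (act g (j y)))" for g
  define e' where "e' z = \<iota> (e z)" for z
  have ms0: "Metric_space Y0 D" using fm.subspace[OF Y0_sub] .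
  have msY: "Metric_space Y dY" unfolding Y_def dY_def j_def by (rule tr_metric[OF ms0 inj])
  interpret y: Metric_space Y dY by (rule msY)
  have jY: "j y \<in> Y0" "\<iota> (j y) = y" if "y \<in> Y" for y
    using that unfolding Y_def j_def by (auto intro: inv_into_into simp: f_inv_into_f)
  have ji: "j (\<iota> f) = f" if "f \<in> Y0" for f
    using that inj unfolding j_def by (simp add: inv_into_f_f)
  have psi_in: "\<psi> g y \<in> Y" "j (\<psi> g y) = act g (j y)" if "g \<in> carrier K" "y \<in> Y" for g y
  proof -
    have a: "act g (j y) \<in> Y0" using act_Y0 jY that by blast
    show "\<psi> g y \<in> Y" using that a unfolding \<psi>_def Y_def by simp
    show "j (\<psi> g y) = act g (j y)" using that a ji unfolding \<psi>_def by simp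
  qed
  have psi_comp: "\<psi> g (\<psi> h y) = \<psi> (g \<otimes> h) y" if "g \<in> carrier K" "h \<in> carrier K" "y \<in> Y" for g h y
  proof -
    have "\<psi> g (\<psi> h y) = \<iota> (act g (j (\<psi> h y)))" using psi_in that unfolding \<psi>_def by simp
    also have "\<dots> = \<iota> (act g (act h (j y)))" using psi_in that by simp
    also have "\<dots> = \<psi> (g \<otimes> h) y" using that(3) unfolding \<psi>_def act_comp[OF that(1,2)] by simp
    finally show ?thesis .
  qed
  have psi_one: "\<psi> \<one> y = y" if "y \<in> Y" for y
    using that jY act_one[OF Y0_ext] unfolding \<psi>_def by simp
  have psi_Bij: "\<psi> g \<in> Bij Y" if g: "g \<in> carrier K" for g
  proof -
    have ig: "inv g \<in> carrier K" using g by simp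
    have "inj_on (\<psi> g) Y"
    proof (rule inj_onI)
      fix x y assume xy: "x \<in> Y" "y \<in> Y" "\<psi> g x = \<psi> g y"
      have "x = \<psi> (inv g) (\<psi> g x)" using psi_comp[OF ig g xy(1)] psi_one[OF xy(1)] g by simp
      moreover have "y = \<psi> (inv g) (\<psi> g y)" using psi_comp[OF ig g xy(2)] psi_one[OF xy(2)] g by simp
      ultimately show "x = y" using xy(3) by simp
    qed
    moreover have "\<psi> g ` Y = Y"
    proof
      show "\<psi> g ` Y \<subseteq> Y" using psi_in g by blast
      show "Y \<subseteq> \<psi> g ` Y"
      proof
        fix y assume y: "y \<in> Y"
        have "y = \<psi> g (\<psi> (inv g) y)" using psi_comp[OF g ig y] psi_one[OF y] g by simp
        then show "y \<in> \<psi> g ` Y" using psi_in[OF ig y] by blast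
      qed
    qed
    ultimately show ?thesis unfolding Bij_def bij_betw_def \<psi>_def by simp
  qed
  have hom: "\<psi> \<in> hom K (BijGroup Y)"
    unfolding hom_def
  proof (intro CollectI conjI ballI)
    show "\<psi> \<in> carrier K \<rightarrow> carrier (BijGroup Y)" using psi_Bij by (simp add: BijGroup_def)
    fix g h assume gh: "g \<in> carrier K" "h \<in> carrier K"
    have "\<psi> g \<otimes>\<^bsub>BijGroup Y\<^esub> \<psi> h = compose Y (\<psi> g) (\<psi> h)"
      using psi_Bij gh by (simp add: BijGroup_def)
    also have "\<dots> = \<psi> (g \<otimes> h)"
    proof (rule ext)
      fix y show "compose Y (\<psi> g) (\<psi> h) y = \<psi> (g \<otimes> h) y"
      proof (cases "y \<in> Y")
        case True then show ?thesis using psi_comp[OF gh True] unfolding compose_def by simp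
      next
        case False then show ?thesis unfolding compose_def \<psi>_def by simp
      qed
    qed
    finally show "\<psi> (g \<otimes> h) = \<psi> g \<otimes>\<^bsub>BijGroup Y\<^esub> \<psi> h" ..
  qed
  have faith: "faithful_action K Y \<psi>"
    unfolding faithful_action_def faithful_action_axioms_def group_action_def group_hom_def group_hom_axioms_def
  proof (intro conjI)
    show "group K" by (rule grp)
    show "group (BijGroup Y)" by (rule group_BijGroup)
    show "\<psi> \<in> hom K (BijGroup Y)" by (rule hom)
    show "inj_on \<psi> (carrier K)"
    proof (rule inj_onI)
      fix g h assume gh: "g \<in> carrier K" "h \<in> carrier K" "\<psi> g = \<psi> h"
      have uY: "\<iota> u \<in> Y" using u_Y0 unfolding Y_def by blast
      have "\<psi> g (\<iota> u) = \<psi> h (\<iota> u)" using gh by simp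
      then have "\<iota> (act g u) = \<iota> (act h u)" using uY ji[OF u_Y0] unfolding \<psi>_def by simp
      then have "act g u = act h u" using inj act_Y0[OF u_Y0] gh by (meson inj_onD)
      then show "g = h" using u_faith gh by blast
    qed
  qed
  have isoY: "isometric_action (carrier K) Y dY \<psi>"
    unfolding isometric_action_def
  proof (intro ballI)
    fix g x y assume g: "g \<in> carrier K" and x: "x \<in> Y" and y: "y \<in> Y"
    show "dY (\<psi> g x) (\<psi> g y) = dY x y"
    proof -
      have "j x \<in> F" "j y \<in> F" using jY x y Y0_sub by auto
      then show ?thesis unfolding dY_def using psi_in g x y act_iso[of "j x" "j y" g] by simp
    qed
  qed
  have contY: "continuous_map (prod_topology dm.mtopology y.mtopology) y.mtopology (\<lambda>(g, y). \<psi> g y)"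
  proof (rule cont_lemma[OF dmet msY])
    show "L > 0" using L_ge by simp
    show "(case (g, y) of (g, y) \<Rightarrow> \<psi> g y) \<in> Y" if "g \<in> carrier K" "y \<in> Y" for g y
      using psi_in that by simp
    fix g h y y' assume a: "g \<in> carrier K" "h \<in> carrier K" "y \<in> Y" "y' \<in> Y"
    show "dY (case (g, y) of (g, y) \<Rightarrow> \<psi> g y) (case (h, y') of (g, y) \<Rightarrow> \<psi> g y) \<le> L * d g h + dY y y'"
      unfolding dY_def using psi_in a act_cont jY by simp
  qed
  have polY: "Polish_metric_space Y dY"
    unfolding Polish_metric_space_def
  proof (intro conjI)
    show "Metric_space Y dY" by (rule msY)
    show "Metric_space.mcomplete Y dY" unfolding Y_def dY_def j_def by (rule tr_complete[OF ms0 inj Y0_complete])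
    show "separable_space y.mtopology" unfolding Y_def dY_def j_def by (rule tr_sep[OF ms0 inj CC])
  qed
  have bY: "bounded_metric_space Y dY"
    unfolding bounded_metric_space_def Y_def dY_def j_def
    using msY tr_bounded[OF ms0 inj Y0_bounded] unfolding Y_def dY_def j_def by blast
  have eY: "e' \<in> Z \<rightarrow> Y" unfolding e'_def Y_def using e_Y0 by blast
  have eiso: "\<forall>z\<in>Z. \<forall>z'\<in>Z. dY (e' z) (e' z') = dZ z z'"
    unfolding dY_def e'_def using ji e_Y0 e_iso by simp
  have eeq: "\<forall>\<gamma>\<in>\<Gamma>. \<forall>z\<in>Z. e' (\<phi> \<gamma> z) = \<psi> \<gamma> (e' z)"
  proof (intro ballI)
    fix \<gamma> z assume g: "\<gamma> \<in> \<Gamma>" and z: "z \<in> Z"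
    have "e' z \<in> Y" using eY z by blast
    then show "e' (\<phi> \<gamma> z) = \<psi> \<gamma> (e' z)"
      unfolding e'_def \<psi>_def using e_equiv[OF g z] ji[OF e_Y0[OF z]] by simp
  qed
  show ?thesis using polY bY faith isoY contY eY eiso eeq by blast
qed

end



lemma dense_from_sep:
  assumes ms: "Metric_space M dd" and sep: "separable_space (Metric_space.mtopology M dd)"
  obtains CC where "countable CC" "CC \<subseteq> M" "\<And>x r. x \<in> M \<Longrightarrow> r > 0 \<Longrightarrow> \<exists>c\<in>CC. dd x c < r"
proof -
  interpret m: Metric_space M dd by (rule ms)
  obtain CC where CC: "countable CC" "CC \<subseteq> M" "m.mtopology closure_of CC = M"
    using sep unfolding separable_space_def by auto
  have "\<exists>c\<in>CC. dd x c < r" if xr: "x \<in> M" "r > 0" for x r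
  proof -
    have "x \<in> m.mtopology closure_of CC" using CC xr by simp
    then obtain c where "c \<in> CC" "c \<in> m.mball x r" using xr unfolding m.metric_closure_of by blast
    then show ?thesis by auto
  qed
  with CC that show ?thesis by blast
qed

theorem lemma6p1:
  fixes K :: "('g, 'b) monoid_scheme" (structure)
    and TK :: "'g topology"
    and \<Gamma> :: "'g set"
    and Z :: "'z set" and dZ :: "'z \<Rightarrow> 'z \<Rightarrow> real"
    and \<phi> :: "'g \<Rightarrow> 'z \<Rightarrow> 'z"
  assumes "Polish_group K TK"
    and "has_compatible_biinvariant_metric K TK"
    and "discrete_subgroup \<Gamma> K TK"
    and "Polish_metric_space Z dZ"
    and "bounded_metric_space Z dZ"
    and "faithful_action (K\<lparr>carrier := \<Gamma>\<rparr>) Z \<phi>"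
    and "isometric_action \<Gamma> Z dZ \<phi>"
  shows "\<exists>(Y :: (nat \<Rightarrow> real) set) dY \<psi> e.
           Polish_metric_space Y dY \<and> bounded_metric_space Y dY \<and>
           faithful_action K Y \<psi> \<and>
           isometric_action (carrier K) Y dY \<psi> \<and>
           continuous_map (prod_topology TK (Metric_space.mtopology Y dY))
                          (Metric_space.mtopology Y dY) (\<lambda>(g, y). \<psi> g y) \<and>
           e \<in> Z \<rightarrow> Y \<and>
           (\<forall>z\<in>Z. \<forall>z'\<in>Z. dY (e z) (e z') = dZ z z') \<and>
           (\<forall>\<gamma>\<in>\<Gamma>. \<forall>z\<in>Z. e (\<phi> \<gamma> z) = \<psi> \<gamma> (e z))"
proof -
  have grp: "group K" and sepK: "separable_space TK"
    using assms(1) unfolding Polish_group_def topological_group_def Polish_space_def by auto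
  obtain d where dmet: "Metric_space (carrier K) d" and dtop: "Metric_space.mtopology (carrier K) d = TK"
    and binv: "\<And>g x y. g\<in>carrier K \<Longrightarrow> x\<in>carrier K \<Longrightarrow> y\<in>carrier K \<Longrightarrow>
                d (g \<otimes> x) (g \<otimes> y) = d x y \<and> d (x \<otimes> g) (y \<otimes> g) = d x y"
    using assms(2) unfolding has_compatible_biinvariant_metric_def by blast
  interpret dm: Metric_space "carrier K" d by (rule dmet)
  interpret grp: group K by (rule grp)
  have sub: "subgroup \<Gamma> K" and dsc: "subtopology TK \<Gamma> = discrete_topology \<Gamma>"
    using assms(3) unfolding discrete_subgroup_def by auto
  have zmet: "Metric_space Z dZ" and zsep: "separable_space (Metric_space.mtopology Z dZ)"
    using assms(4) unfolding Polish_metric_space_def by auto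
  interpret zm: Metric_space Z dZ by (rule zmet)
  obtain B0 where B0: "\<And>x y. x \<in> Z \<Longrightarrow> y \<in> Z \<Longrightarrow> dZ x y \<le> B0"
    using assms(5) unfolding bounded_metric_space_def zm.mbounded_alt by blast
  have ga: "group_action (K\<lparr>carrier := \<Gamma>\<rparr>) Z \<phi>"
    using assms(6) by (rule faithful_action.axioms(1))
  have one\<Gamma>: "\<one> \<in> \<Gamma>" using sub by (rule subgroup.one_closed)
  have "openin (subtopology TK \<Gamma>) {\<one>}" using dsc one\<Gamma> by simp
  then obtain U where U: "openin TK U" "{\<one>} = U \<inter> \<Gamma>" unfolding openin_subtopology by blast
  have "\<one> \<in> U" using U(2) by blast
  then obtain \<delta> where \<delta>: "\<delta> > 0" "dm.mball \<one> \<delta> \<subseteq> U"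
    using U(1) unfolding dtop[symmetric] dm.openin_mtopology by blast
  have disc: "\<gamma> = \<one>" if "\<gamma> \<in> \<Gamma>" "d \<one> \<gamma> < \<delta>" for \<gamma>
  proof -
    have "\<gamma> \<in> carrier K" using that sub subgroup.subset by blast
    then have "\<gamma> \<in> dm.mball \<one> \<delta>" using that by simp
    then have "\<gamma> \<in> U \<inter> \<Gamma>" using \<delta> that by blast
    then show ?thesis using U(2) by blast
  qed
  interpret c: cnstr K d \<Gamma> Z dZ \<phi> "max B0 1" \<delta>
  proof (rule cnstr.intro[OF grp dmet binv sub ga assms(7) zmet])
    show "\<And>x y. x \<in> Z \<Longrightarrow> y \<in> Z \<Longrightarrow> dZ x y \<le> max B0 1" using B0 by (meson max.coboundedI1)
    show "1 \<le> max B0 1" by simp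
    show "\<delta> > 0" by (rule \<delta>(1))
    show "\<And>\<gamma>. \<gamma> \<in> \<Gamma> \<Longrightarrow> d \<one> \<gamma> < \<delta> \<Longrightarrow> \<gamma> = \<one>" by (rule disc)
  qed
  obtain Gc where Gc: "countable Gc" "Gc \<subseteq> carrier K" "\<And>g r. g \<in> carrier K \<Longrightarrow> r > 0 \<Longrightarrow> \<exists>c\<in>Gc. d g c < r"
    using dense_from_sep[OF dmet] sepK dtop by metis
  obtain Zc where Zc: "countable Zc" "Zc \<subseteq> Z" "\<And>z r. z \<in> Z \<Longrightarrow> r > 0 \<Longrightarrow> \<exists>c\<in>Zc. dZ z c < r"
    using dense_from_sep[OF zmet zsep] by metis
  obtain CC where CC: "countable CC" "CC \<subseteq> c.Y0" "\<forall>f\<in>c.Y0. \<forall>r>0. \<exists>c\<in>CC. c.D f c < r"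
    using c.Y0_sep[OF Gc Zc] by blast
  have ms0: "Metric_space c.Y0 c.D" using c.fm.subspace[OF c.Y0_sub] .
  obtain \<iota> :: "('g \<times> 'z option \<Rightarrow> real) \<Rightarrow> nat \<Rightarrow> real" where inj: "inj_on \<iota> c.Y0"
    using exists_inj[OF ms0 CC] by blast
  show ?thesis using c.final[OF inj CC] unfolding dtop .
qed


end
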